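(* Let $N\geq1$, $0\leq m\leq2$ and $\varepsilon>0$. Let $a\in C(\mathbb{R}^N)$ and let $J\in L^1(\mathbb{R}^N)$ be nonnegative, radially symmetric, with $\int_{\mathbb{R}^N}J=1$; set $J_\varepsilon(z)=\varepsilon^{-N}J(z/\varepsilon)$. Suppose $u_\varepsilon\in L^\infty(\mathbb{R}^N)$ is nonnegative and satisfies $$\frac{1}{\varepsilon^m}\big(J_\varepsilon\ast u_\varepsilon-u_\varepsilon\big)+u_\varepsilon(a-u_\varepsilon)=0\quad\text{a.e. in }\mathbb{R}^N.$$ Then either $u_\varepsilon>0$ a.e. in $\mathbb{R}^N$ or $u_\varepsilon\equiv0$ a.e. in $\mathbb{R}^N$.
   Context: $(J_\varepsilon\ast u)(x)=\int_{\mathbb{R}^N}J_\varepsilon(x-y)u(y)\,\mathrm{d}y$. *)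

theory Defs
  imports "HOL-Analysis.Analysis"
begin

definition rescaled_kernel :: "real \<Rightarrow> ('a::euclidean_space \<Rightarrow> real) \<Rightarrow> 'a \<Rightarrow> real" where
  "rescaled_kernel \<epsilon> J z = J (scaleR (1 / \<epsilon>) z) / \<epsilon> ^ DIM('a)"

definition conv :: "('a::euclidean_space \<Rightarrow> real) \<Rightarrow> ('a \<Rightarrow> real) \<Rightarrow> 'a \<Rightarrow> real" where
  "conv K u x = (\<integral>y. K (x - y) * u y \<partial>lebesgue)"

end

theory Submission
  imports Defs
begin


lemma AE_lborel_affine:
  fixes P :: "'a::euclidean_space \<Rightarrow> bool" and c :: real
  assumes c: "c \<noteq> 0" and [measurable]: "Measurable.pred borel P"
    and ae: "AE x in lborel. P x"
  shows "AE x in lborel. P (t + c *\<^sub>R x)"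
proof -
  have "AE x in density (distr lborel borel (\<lambda>x. t + c *\<^sub>R x)) (\<lambda>_. ennreal (\<bar>c\<bar>^DIM('a))). P x"
    using ae by (simp only: lborel_affine[OF c, of t, symmetric])
  then show ?thesis
    by (simp add: AE_density AE_distr_iff c)
qed

lemma nn_integral_lborel_affine:
  fixes f :: "'a::euclidean_space \<Rightarrow> ennreal" and c :: real
  assumes f[measurable]: "f \<in> borel_measurable borel" and c: "c \<noteq> 0"
  shows "(\<integral>\<^sup>+x. f x \<partial>lborel) = ennreal (\<bar>c\<bar> ^ DIM('a)) * (\<integral>\<^sup>+x. f (t + c *\<^sub>R x) \<partial>lborel)"
proof -
  have "(\<integral>\<^sup>+x. f x \<partial>lborel) = (\<integral>\<^sup>+x. f x \<partial>density (distr lborel borel (\<lambda>x. t + c *\<^sub>R x)) (\<lambda>_. ennreal (\<bar>c\<bar>^DIM('a))))"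
    using lborel_affine[OF c, of t] by simp
  also have "\<dots> = (\<integral>\<^sup>+x. ennreal (\<bar>c\<bar>^DIM('a)) * f (t + c *\<^sub>R x) \<partial>lborel)"
    by (simp add: nn_integral_density nn_integral_distr)
  also have "\<dots> = ennreal (\<bar>c\<bar> ^ DIM('a)) * (\<integral>\<^sup>+x. f (t + c *\<^sub>R x) \<partial>lborel)"
    by (simp add: nn_integral_cmult)
  finally show ?thesis .
qed



lemma steinhaus_bounded:
  fixes F :: "'a::euclidean_space set"
  assumes F: "F \<in> lmeasurable" and bF: "bounded F" and pos: "measure lebesgue F > 0"
  shows "\<exists>r>0. \<forall>v. norm v < r \<longrightarrow> (\<exists>a\<in>F. \<exists>b\<in>F. v = a - b)"
proof -
  define m where "m = measure lebesgue F"
  have m: "m > 0" using pos m_def by simp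
  obtain T where T: "closed T" "T \<subseteq> F" "F - T \<in> lmeasurable" "emeasure lebesgue (F - T) < ennreal (m/2)"
    using sets_lebesgue_inner_closed[of F "m/2"] F m by (auto simp: fmeasurable_def)
  have Tm: "T \<in> lmeasurable"
    using T F by (metis Diff_Diff_Int fmeasurable.Diff inf.absorb_iff2)
  have "measure lebesgue (F - T) < m/2"
    using T(3,4) by (simp add: emeasure_eq_measure2 ennreal_less_iff)
  moreover have "measure lebesgue F = measure lebesgue T + measure lebesgue (F - T)"
    using measure_Un2[OF Tm T(3)] T(2) by (simp add: Un_absorb1)
  ultimately have mT: "measure lebesgue T > 0" using m_def m by linarith
  obtain U where U: "open U" "T \<subseteq> U" "U - T \<in> lmeasurable"
      "emeasure lebesgue (U - T) < ennreal (measure lebesgue T)"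
    using sets_lebesgue_outer_open[of T "measure lebesgue T"] Tm mT by (auto simp: fmeasurable_def)
  have UT: "measure lebesgue (U - T) < measure lebesgue T"
    using U(3,4) mT by (simp add: emeasure_eq_measure2 ennreal_less_iff)
  have Um: "U \<in> lmeasurable"
    using fmeasurable.Un[OF Tm U(3)] U(2) by (simp add: Un_absorb1)
  have mU: "measure lebesgue U = measure lebesgue T + measure lebesgue (U - T)"
    using measure_Un2[OF Tm U(3)] U(2) by (simp add: Un_absorb1)
  have "compact T"
    using T(1,2) bF bounded_subset compact_eq_bounded_closed by blast
  then obtain d where d: "d > 0" "\<forall>x\<in>T. \<forall>y\<in>-U. d \<le> dist x y"
    using separate_compact_closed[of T "-U"] U(1,2) by auto
  show ?thesis
  proof (intro exI[of _ d] conjI allI impI d(1))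
    fix v :: 'a assume v: "norm v < d"
    show "\<exists>a\<in>F. \<exists>b\<in>F. v = a - b"
    proof (rule ccontr)
      assume nv: "\<not> ?thesis"
      have disj: "T \<inter> ((+) v ` T) = {}"
      proof (rule ccontr)
        assume "T \<inter> ((+) v ` T) \<noteq> {}"
        then obtain b where "b \<in> T" "v + b \<in> T" by auto
        then show False using nv T(2) by (metis add_diff_cancel subsetD)
      qed
      have sub: "(+) v ` T \<subseteq> U"
      proof
        fix y assume "y \<in> (+) v ` T"
        then obtain x where x: "x \<in> T" "y = v + x" by auto
        have "dist x y = norm v" using x by (simp add: dist_norm)
        then show "y \<in> U" using d x v by force
      qed
      have vT: "(+) v ` T \<in> lmeasurable" using measurable_translation[OF Tm] .
      have "measure lebesgue (T \<union> (+) v ` T) = 2 * measure lebesgue T"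
        using measure_Un3[OF Tm vT] disj by (simp add: measure_translation)
      moreover have "measure lebesgue (T \<union> (+) v ` T) \<le> measure lebesgue U"
        using sub U(2) Um fmeasurable.Un[OF Tm vT] by (intro measure_mono_fmeasurable) (auto simp: fmeasurable_def)
      ultimately show False using mU UT by linarith
    qed
  qed
qed

lemma steinhaus:
  fixes E :: "'a::euclidean_space set"
  assumes E: "E \<in> sets borel" and pos: "emeasure lborel E > 0"
  shows "\<exists>r>0. \<forall>v. norm v < r \<longrightarrow> (\<exists>a\<in>E. \<exists>b\<in>E. v = a - b)"
proof -
  have "\<exists>n::nat. emeasure lborel (E \<inter> cball 0 (real n)) \<noteq> 0"
  proof (rule ccontr)
    assume "\<not> ?thesis"
    then have "emeasure lborel (\<Union>n. E \<inter> cball 0 (real n)) = 0"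
      by (intro emeasure_UN_eq_0) (auto simp: E)
    moreover have "(\<Union>n. E \<inter> cball 0 (real n)) = E"
      by (auto simp: real_arch_simple)
    ultimately show False using pos by simp
  qed
  then obtain n :: nat where n: "emeasure lborel (E \<inter> cball 0 (real n)) \<noteq> 0" by blast
  define F where "F = E \<inter> cball 0 (real n)"
  have bF: "bounded F" unfolding F_def by (meson bounded_Int bounded_cball)
  have Fs: "F \<in> sets lebesgue" unfolding F_def using E by auto
  have Fm: "F \<in> lmeasurable" using bounded_set_imp_lmeasurable[OF bF Fs] .
  have "F \<in> sets lborel" unfolding F_def using E by auto
  then have "emeasure lebesgue F \<noteq> 0" using n unfolding F_def
    by simp
  then have "measure lebesgue F > 0"
    using emeasure_eq_measure2[OF Fm] by (simp add: zero_less_measure_iff)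
  from steinhaus_bounded[OF Fm bF this] show ?thesis unfolding F_def by blast
qed


lemma additive_zero:
  fixes Z P :: "'a::euclidean_space set"
  assumes [measurable]: "Z \<in> sets borel" and ZP: "Z = - P"
    and s: "AE x in lborel. x \<in> Z \<longrightarrow> x + s \<in> Z"
    and t: "AE x in lborel. x \<in> Z \<longrightarrow> x + t \<in> Z"
  shows "AE x in lborel. x \<in> Z \<longrightarrow> x + (s + t) \<in> Z"
proof -
  have "AE x in lborel. s + x \<in> Z \<longrightarrow> (s + x) + t \<in> Z"
    using AE_lborel_affine[of 1 "\<lambda>x. x \<in> Z \<longrightarrow> x + t \<in> Z" s] t by simp
  with s show ?thesis by eventually_elim (simp add: add.commute add.left_commute)
qed

lemma completion_AE_measurable:
  fixes f g :: "'a \<Rightarrow> real"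
  assumes g: "g \<in> borel_measurable (completion M)" and ae: "AE x in M. f x = g x"
  shows "f \<in> borel_measurable (completion M)"
  unfolding borel_measurable_iff_less
proof
  fix a :: real
  have A: "{w \<in> space (completion M). g w < a} \<in> sets (completion M)"
    using g by (simp add: borel_measurable_iff_less)
  have "AE x in completion M. x \<in> {w \<in> space (completion M). g w < a} \<longleftrightarrow> x \<in> {w \<in> space (completion M). f w < a}"
    using AE_completion[OF ae] by eventually_elim auto
  then show "{w \<in> space (completion M). f w < a} \<in> sets (completion M)"
    using completion.in_sets_AE[OF _ A] by auto
qed

theorem lemma2p1:
  fixes a J u :: "'a::euclidean_space \<Rightarrow> real" and m \<epsilon> :: real
  assumes m_nonneg: "0 \<le> m" and m_le2: "m \<le> 2"
    and eps_pos: "\<epsilon> > 0"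
    and a_cont: "continuous_on UNIV a"
    and J_int: "integrable lebesgue J"
    and J_nonneg: "\<And>z. J z \<ge> 0"
    and J_radial: "\<And>x y. norm x = norm y \<Longrightarrow> J x = J y"
    and J_mass: "(\<integral>z. J z \<partial>lebesgue) = 1"
    and u_meas: "u \<in> borel_measurable lebesgue"
    and u_bdd: "\<exists>C. AE x in lebesgue. \<bar>u x\<bar> \<le> C"
    and u_nonneg: "AE x in lebesgue. u x \<ge> 0"
    and eqn: "AE x in lebesgue.
      (conv (rescaled_kernel \<epsilon> J) u x - u x) / \<epsilon> powr m + u x * (a x - u x) = 0"
  shows "(AE x in lebesgue. u x > 0) \<or> (AE x in lebesgue. u x = 0)"
proof -
  have Jm: "J \<in> borel_measurable lebesgue" using J_int by (rule borel_measurable_integrable)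
  obtain J0 where J0[measurable]: "J0 \<in> borel_measurable lborel" and J0ae: "AE x in lborel. J x = J0 x"
    using completion_ex_borel_measurable_real[OF Jm] by blast
  define J1 where "J1 x = max 0 (J0 x)" for x
  have J1m[measurable]: "J1 \<in> borel_measurable borel" unfolding J1_def by measurable
  have J1ae: "AE x in lborel. J x = J1 x" using J0ae by eventually_elim (metis J_nonneg J1_def max.absorb2)
  have J1nn: "J1 x \<ge> 0" for x by (simp add: J1_def)
  obtain N0 where N0: "N0 \<in> null_sets lborel" and N0J: "\<And>x. x \<notin> N0 \<Longrightarrow> J x = J1 x"
    using AE_E3[OF J1ae] by auto
  have N0s[measurable]: "N0 \<in> sets borel" using N0 by auto
  have aeN0: "AE x in lborel. x \<notin> N0" using N0 AE_not_in by blast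
  define D0 where "D0 = {z. J1 z > 0 \<and> J1 (-z) > 0 \<and> z \<notin> N0 \<and> -z \<notin> N0}"
  have D0s[measurable]: "D0 \<in> sets borel" unfolding D0_def by measurable
  have D0J: "J z > 0" if "z \<in> D0" for z using that N0J unfolding D0_def by auto
  have D0sym: "-z \<in> D0" if "z \<in> D0" for z using that unfolding D0_def by auto
  have aeN0m: "AE x in lborel. -x \<notin> N0"
    using AE_lborel_affine[of "-1" "\<lambda>x. x \<notin> N0" 0] aeN0 by simp
  have D0pos: "emeasure lborel D0 \<noteq> 0"
  proof
    assume "emeasure lborel D0 = 0"
    then have "AE z in lborel. z \<notin> D0" using AE_iff_measurable[of D0 lborel] by auto
    then have "AE z in lborel. J z = 0" using aeN0 aeN0m
    proof eventually_elim
      case (elim z)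
      have "J (-z) = J z" using J_radial[of "-z" z] by simp
      then have "\<not> J1 z > 0" using elim N0J[of z] N0J[of "-z"] unfolding D0_def by auto
      then show ?case using N0J[of z] elim J1nn[of z] by simp
    qed
    then have ae0: "AE z in lebesgue. J z = 0" by (rule AE_completion)
    have "(\<integral>z. J z \<partial>lebesgue) = 0"
      using integral_eq_zero_AE[OF ae0] by simp
    then show False using J_mass by simp
  qed
  define D where "D = {z. scaleR (1/\<epsilon>) z \<in> D0}"
  have Ds[measurable]: "D \<in> sets borel" unfolding D_def by measurable
  have Dsym: "-z \<in> D \<longleftrightarrow> z \<in> D" for z using D0sym unfolding D_def by force
  have Dpos: "emeasure lborel D \<noteq> 0"
  proof
    assume "emeasure lborel D = 0"
    then have "AE z in lborel. z \<notin> D" using AE_iff_measurable[of D lborel] by auto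
    from AE_lborel_affine[of \<epsilon> "\<lambda>z. z \<notin> D" 0, OF _ _ this]
    have "AE z in lborel. z \<notin> D0" using eps_pos by (simp add: D_def)
    then have "emeasure lborel D0 = 0" using AE_iff_measurable[of D0 lborel] by auto
    then show False using D0pos by simp
  qed
  obtain u0 where u0[measurable]: "u0 \<in> borel_measurable lborel" and u0ae: "AE x in lborel. u x = u0 x"
    using completion_ex_borel_measurable_real[OF u_meas] by blast
  define u1 where "u1 x = max 0 (u0 x)" for x
  have u1m[measurable]: "u1 \<in> borel_measurable borel" unfolding u1_def by measurable
  have u1nn: "u1 x \<ge> 0" for x by (simp add: u1_def)
  have u1ae: "AE x in lborel. u x = u1 x"
    using u0ae u_nonneg[unfolded AE_completion_iff] by eventually_elim (simp add: u1_def)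
  obtain C0 where C0: "AE x in lebesgue. \<bar>u x\<bar> \<le> C0" using u_bdd by blast
  define C where "C = max 0 C0"
  have C: "AE x in lborel. u1 x \<le> C"
    using C0[unfolded AE_completion_iff] u1ae by eventually_elim (auto simp: C_def)
  have Cnn: "C \<ge> 0" by (simp add: C_def)
  define P where "P = {x. u1 x > 0}"
  define Z where "Z = {x. u1 x = 0}"
  have Ps[measurable]: "P \<in> sets borel" unfolding P_def by measurable
  have Zs[measurable]: "Z \<in> sets borel" unfolding Z_def by measurable
  have ZP: "Z = - P" unfolding Z_def P_def using u1nn by (auto simp: order.order_iff_strict)
  define K1 where "K1 z = J1 (scaleR (1/\<epsilon>) z) / \<epsilon> ^ DIM('a)" for z
  have K1m[measurable]: "K1 \<in> borel_measurable borel" unfolding K1_def by measurable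
  have K1nn: "K1 z \<ge> 0" for z unfolding K1_def using J1nn eps_pos by simp
  have K1D: "K1 z > 0" if "z \<in> D" for z
    using that eps_pos unfolding K1_def D_def D0_def by simp
  have J1int: "integrable lborel J1"
  proof -
    have "integrable lebesgue J1"
      using J_int J1ae[THEN AE_completion] Jm
      by (intro integrable_cong_AE[THEN iffD1, OF _ _ _ J_int]) (auto intro: measurable_completion)
    then show ?thesis by (simp add: integrable_completion)
  qed
  have K1fin: "(\<integral>\<^sup>+z. ennreal (K1 z) \<partial>lborel) < \<infinity>"
  proof -
    have J1fin: "(\<integral>\<^sup>+z. ennreal (J1 z) \<partial>lborel) < \<infinity>"
      using integrableD(2)[OF J1int] J1nn by (simp add: top.not_eq_extremum)
    have "(\<integral>\<^sup>+z. ennreal (K1 z) \<partial>lborel) = ennreal (\<bar>\<epsilon>\<bar> ^ DIM('a)) * (\<integral>\<^sup>+x. ennreal (K1 (0 + \<epsilon> *\<^sub>R x)) \<partial>lborel)"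
      using eps_pos by (intro nn_integral_lborel_affine) auto
    also have "(\<integral>\<^sup>+x. ennreal (K1 (0 + \<epsilon> *\<^sub>R x)) \<partial>lborel) = (\<integral>\<^sup>+x. ennreal (J1 x) * ennreal (1 / \<epsilon> ^ DIM('a)) \<partial>lborel)"
      using eps_pos J1nn by (intro nn_integral_cong) (simp add: K1_def ennreal_mult'' divide_inverse)
    also have "\<dots> = (\<integral>\<^sup>+x. ennreal (J1 x) \<partial>lborel) * ennreal (1 / \<epsilon> ^ DIM('a))"
      by (rule nn_integral_multc) measurable
    finally show ?thesis using J1fin by (simp add: ennreal_mult_less_top)
  qed
  have eqn': "AE x in lborel. (conv (rescaled_kernel \<epsilon> J) u x - u x) / \<epsilon> powr m + u x * (a x - u x) = 0"
    using eqn by (simp add: AE_completion_iff)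
  have step3: "AE x in lborel. x \<in> Z \<longrightarrow> (\<integral>\<^sup>+y. indicator D (x - y) * indicator P y \<partial>lborel) = 0"
    using eqn' u1ae
  proof eventually_elim
    case (elim x)
    show ?case
    proof
      assume "x \<in> Z"
      then have ux: "u x = 0" using elim by (simp add: Z_def)
      have conv0: "conv (rescaled_kernel \<epsilon> J) u x = 0" using elim(1) ux eps_pos by simp
      define g where "g y = K1 (x - y) * u1 y" for y
      have gm[measurable]: "g \<in> borel_measurable borel" unfolding g_def by measurable
      have gnn: "g y \<ge> 0" for y unfolding g_def using K1nn u1nn by simp
      have aeN: "AE y in lborel. scaleR (1/\<epsilon>) (x - y) \<notin> N0"
        using AE_lborel_affine[of "-1/\<epsilon>" "\<lambda>z. z \<notin> N0" "scaleR (1/\<epsilon>) x", OF _ _ aeN0] eps_pos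
        by (simp add: scaleR_diff_right)
      have aeg: "AE y in lborel. rescaled_kernel \<epsilon> J (x - y) * u y = g y"
        using aeN u1ae by eventually_elim (simp add: rescaled_kernel_def g_def K1_def N0J)
      have gm': "g \<in> borel_measurable lebesgue" by (rule measurable_completion) simp
      have "conv (rescaled_kernel \<epsilon> J) u x = (\<integral>y. g y \<partial>lebesgue)"
        unfolding conv_def
        by (rule integral_cong_AE[OF completion_AE_measurable[OF gm' aeg] gm' AE_completion[OF aeg]])
      also have "\<dots> = (\<integral>y. g y \<partial>lborel)" by (rule integral_completion) simp
      also have "\<dots> = enn2real (\<integral>\<^sup>+y. ennreal (g y) \<partial>lborel)"
        by (rule integral_eq_nn_integral) (auto simp: gnn)
      finally have e0: "enn2real (\<integral>\<^sup>+y. ennreal (g y) \<partial>lborel) = 0" using conv0 by simp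
      have "(\<integral>\<^sup>+y. ennreal (g y) \<partial>lborel) \<le> (\<integral>\<^sup>+y. ennreal C * ennreal (K1 (x + (-1) *\<^sub>R y)) \<partial>lborel)"
        using C
      proof (intro nn_integral_mono_AE, eventually_elim)
        case (elim y)
        then have "g y \<le> C * K1 (x + (-1) *\<^sub>R y)" unfolding g_def using K1nn[of "x - y"]
          by (simp add: mult.commute[of C] mult_left_mono)
        then show ?case using Cnn K1nn[of "x - y"] by (metis ennreal_leI ennreal_mult diff_conv_add_uminus scaleR_minus1_left)
      qed
      also have "\<dots> = ennreal C * (\<integral>\<^sup>+y. ennreal (K1 (x + (-1) *\<^sub>R y)) \<partial>lborel)"
        by (rule nn_integral_cmult) measurable
      also have "(\<integral>\<^sup>+y. ennreal (K1 (x + (-1) *\<^sub>R y)) \<partial>lborel) = (\<integral>\<^sup>+z. ennreal (K1 z) \<partial>lborel)"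
        using nn_integral_lborel_affine[of "\<lambda>z. ennreal (K1 z)" "-1" x] by simp
      finally have "(\<integral>\<^sup>+y. ennreal (g y) \<partial>lborel) < \<infinity>"
        using K1fin by (simp add: ennreal_mult_less_top le_less_trans)
      then have "(\<integral>\<^sup>+y. ennreal (g y) \<partial>lborel) = 0" using e0 by (auto simp: enn2real_eq_0_iff)
      then have "AE y in lborel. ennreal (g y) = 0" by (subst (asm) nn_integral_0_iff_AE) auto
      then have "AE y in lborel. indicator D (x - y) * indicator P y = (0::ennreal)"
      proof eventually_elim
        case (elim y)
        show ?case
        proof (cases "x - y \<in> D")
          case True
          then have "K1 (x - y) > 0" by (rule K1D)
          then have "u1 y = 0" using elim gnn[of y] by (simp add: g_def)
          then show ?thesis by (simp add: P_def)
        qed simp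
      qed
      then show "(\<integral>\<^sup>+y. indicator D (x - y) * indicator P y \<partial>lborel) = 0"
        by (subst nn_integral_0_iff_AE) auto
    qed
  qed
  define \<Phi> where "\<Phi> t = (\<integral>\<^sup>+x. indicator Z x * indicator P (x + t) \<partial>lborel)" for t
  have \<Phi>m[measurable]: "\<Phi> \<in> borel_measurable borel" unfolding \<Phi>_def by measurable
  have step4: "AE t in lborel. t \<in> D \<longrightarrow> \<Phi> t = 0"
  proof -
    have inner: "(\<integral>\<^sup>+y. indicator D (x - y) * indicator P y \<partial>lborel) = (\<integral>\<^sup>+t. indicator D (-t) * indicator P (x + t) \<partial>lborel)" for x
      using nn_integral_lborel_affine[of "\<lambda>y. indicator D (x - y) * indicator P y :: ennreal" 1 x] by simp
    have "AE x in lborel. (\<integral>\<^sup>+t. indicator Z x * indicator D (-t) * indicator P (x + t) \<partial>lborel) = 0"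
      using step3
    proof eventually_elim
      case (elim x)
      show ?case
      proof (cases "x \<in> Z")
        case True
        then show ?thesis using elim inner[of x] by simp
      qed simp
    qed
    then have "(\<integral>\<^sup>+x. \<integral>\<^sup>+t. indicator Z x * indicator D (-t) * indicator P (x + t) \<partial>lborel \<partial>lborel) = 0"
      by (subst nn_integral_0_iff_AE) auto
    then have "(\<integral>\<^sup>+t. \<integral>\<^sup>+x. indicator Z x * indicator D (-t) * indicator P (x + t) \<partial>lborel \<partial>lborel) = 0"
      by (subst lborel_pair.Fubini') auto
    moreover have "(\<integral>\<^sup>+x. indicator Z x * indicator D (-t) * indicator P (x + t) \<partial>lborel) = indicator D (-t) * \<Phi> t" for t
      unfolding \<Phi>_def by (subst nn_integral_cmult[symmetric]) (auto intro!: nn_integral_cong simp: mult_ac)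
    ultimately have "(\<integral>\<^sup>+t. indicator D (-t) * \<Phi> t \<partial>lborel) = 0" by simp
    then have "AE t in lborel. indicator D (-t) * \<Phi> t = 0"
      by (subst (asm) nn_integral_0_iff_AE) auto
    then show ?thesis by eventually_elim (auto simp: Dsym split: split_indicator)
  qed
  have \<Phi>0: "\<Phi> t = 0 \<longleftrightarrow> (AE x in lborel. x \<in> Z \<longrightarrow> x + t \<in> Z)" for t
    unfolding \<Phi>_def by (subst nn_integral_0_iff_AE) (auto simp: ZP split: split_indicator)
  have add: "\<Phi> (s + t) = 0" if "\<Phi> s = 0" "\<Phi> t = 0" for s t
    using additive_zero[OF Zs ZP] \<Phi>0 that by blast
  define E where "E = {t \<in> D. \<Phi> t = 0 \<and> \<Phi> (-t) = 0}"
  have Es[measurable]: "E \<in> sets borel" unfolding E_def by measurable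
  have "AE t in lborel. -t \<in> D \<longrightarrow> \<Phi> (-t) = 0"
    using AE_lborel_affine[of "-1" "\<lambda>t. t \<in> D \<longrightarrow> \<Phi> t = 0" 0, OF _ _ step4] by simp
  then have "AE t in lborel. t \<in> D \<longrightarrow> t \<in> E"
    using step4 by eventually_elim (auto simp: E_def Dsym)
  then have "emeasure lborel D \<le> emeasure lborel E" by (rule emeasure_mono_AE) simp
  then have "emeasure lborel E > 0" using Dpos by (metis le_zero_eq not_gr_zero)
  from steinhaus[OF _ this] obtain r where r: "r > 0" "\<And>v. norm v < r \<Longrightarrow> \<exists>a\<in>E. \<exists>b\<in>E. v = a - b"
    by auto
  have small: "\<Phi> v = 0" if nv: "norm v < r" for v
  proof -
    obtain a b where "a \<in> E" "b \<in> E" "v = a - b" using r(2)[OF nv] by blast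
    then show ?thesis using add[of a "-b"] by (simp add: E_def)
  qed
  have allz: "\<Phi> v = 0" for v
  proof -
    obtain n :: nat where n: "norm v / r < real n" using reals_Archimedean2 by blast
    then have n0: "n > 0" using r(1) by (metis gr0I norm_ge_zero divide_nonneg_pos of_nat_0 not_less)
    define w where "w = v /\<^sub>R real n"
    have "norm w < r" using n n0 r(1) by (simp add: w_def field_simps)
    then have w0: "\<Phi> w = 0" by (rule small)
    have "\<Phi> (real (Suc j) *\<^sub>R w) = 0" for j
    proof (induction j)
      case 0 then show ?case using w0 by simp
    next
      case (Suc j)
      have "real (Suc (Suc j)) *\<^sub>R w = real (Suc j) *\<^sub>R w + w"
        unfolding of_nat_Suc[of "Suc j"] by (simp only: scaleR_add_left scaleR_one add.commute)
      then show ?case using add[OF Suc w0] by simp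
    qed
    from this[of "n - 1"] show ?thesis using n0 by (simp add: w_def)
  qed
  have "(\<integral>\<^sup>+t. \<Phi> t \<partial>lborel) = 0" using allz by simp
  then have "(\<integral>\<^sup>+x. \<integral>\<^sup>+t. indicator Z x * indicator P (x + t) \<partial>lborel \<partial>lborel) = 0"
    unfolding \<Phi>_def by (subst (asm) lborel_pair.Fubini') auto
  moreover have "(\<integral>\<^sup>+t. indicator Z x * indicator P (x + t) \<partial>lborel) = indicator Z x * emeasure lborel P" for x
  proof -
    have "(\<integral>\<^sup>+t. indicator P (x + t) \<partial>lborel) = emeasure lborel P"
      using nn_integral_lborel_affine[of "indicator P :: _ \<Rightarrow> ennreal" 1 x] by simp
    then show ?thesis by (subst nn_integral_cmult) auto
  qed
  ultimately have "(\<integral>\<^sup>+x. indicator Z x * emeasure lborel P \<partial>lborel) = 0" by simp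
  then have "emeasure lborel Z * emeasure lborel P = 0"
    by (subst (asm) nn_integral_multc) auto
  then have "emeasure lborel Z = 0 \<or> emeasure lborel P = 0" by simp
  then show ?thesis
  proof
    assume "emeasure lborel Z = 0"
    then have "AE x in lborel. x \<notin> Z" using AE_iff_measurable[of Z lborel] by auto
    then have "AE x in lborel. u x > 0" using u1ae
      by eventually_elim (use u1nn in \<open>auto simp: Z_def order.order_iff_strict\<close>)
    then show ?thesis by (simp add: AE_completion_iff)
  next
    assume "emeasure lborel P = 0"
    then have "AE x in lborel. x \<notin> P" using AE_iff_measurable[of P lborel] by auto
    then have "AE x in lborel. u x = 0" using u1ae
      by eventually_elim (use u1nn in \<open>auto simp: P_def order.order_iff_strict\<close>)
    then show ?thesis by (simp add: AE_completion_iff)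
  qed
qed

end
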